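(* In the setting described in the context, for every $j\in[\varepsilon^{-1}]$ it holds that $$\mathbb{E}\left[v(\gamma^{j-1})\right]=(1-(j-1)\varepsilon)\cdot v(S^* )=(1-(j-1)\varepsilon)\cdot\mathrm{OPT}(\mathcal{I}).$$
   Context: A CMK instance is $\mathcal{I}=(I,w,v,m,k)$ with $I$ a finite item set, $w:I\to[0,1]$, $v:I\to\mathbb{R}_{\ge0}$, $m,k\in\mathbb{N}_{>0}$. A configuration is $C\subseteq I$ with $|C|\le k$ and $\sum_{i\in C}w(i)\le1$; $\mathcal{C}$ is the set of configurations and $\mathcal{C}(i)=\{C\in\mathcal{C}:i\in C\}$. A solution is a tuple of $m$ configurations, with value $v$ of their union; $\mathrm{OPT}(\mathcal{I})$ is the maximum value. A fractional solution is $x\in\mathbb{R}_{\ge0}^{\mathcal{C}}$, with $\mathrm{cover}_i(x)=\sum_{C\in\mathcal{C}(i)}x_C$, $\|x\|=\sum_Cx_C$; it is feasible if $\mathrm{cover}(x)\in[0,1]^I$; for $y\in\mathbb{R}^I$, $v(y)=\sum_iy_iv(i)$, and $v(x)=v(\mathrm{cover}(x))$. For $S\subseteq I$ and $\ell\in\mathbb{N}$, $\mathrm{LP}(S,\ell)$ is: maximize $v(x)$ over feasible fractional solutions $x$ with $x_C=0$ whenever $C\not\subseteq S$, and $\|x\|=\ell$. For $\|x\|\ne0$, a random configuration $R$ is distributed by $x$ ($R\sim x$) if $\Pr(R=C)=x_C/\|x\|$. Given $\varepsilon\in(0,0.1)$, $\mathcal{I}$ is $\varepsilon$-simple if $m>\exp(\exp(\varepsilon^{-30}))$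 and $\varepsilon m\in\mathbb{N}$. Iterative randomized rounding: let $\varepsilon\in(0,0.1)$ with $\varepsilon^{-1/2}\in\mathbb{N}$ and $\mathcal{I}$ be $\varepsilon$-simple; let $q=\varepsilon m$ and $S_0=I$. For $j=1,\dots,\varepsilon^{-1}$: let $m_j=m(1-(j-1)\varepsilon)$; let $x^j$ be a $(1-\varepsilon)$-approximate solution of $\mathrm{LP}(S_{j-1},m_j)$ (a feasible solution of value at least $(1-\varepsilon)$ times its optimum), determined by the outcomes of the samples of previous iterations; sample independently $R^j_1,\dots,R^j_q\sim x^j$; set $S_j=S_{j-1}\setminus\bigcup_{b=1}^qR^j_b$. Let $\mathcal{F}_0$ be the trivial $\sigma$-algebra and $\mathcal{F}_j$ the $\sigma$-algebra generated by $\{R^{j'}_b: j'\le j,\ b\in[q]\}$. Fix an optimal solution $(C^*_1,\dots,C^*_m)$ and let $S^*=\bigcup_bC^*_b$ (so $v(S^* )=\mathrm{OPT}(\mathcal{I})$). Define $\gamma^0=\mathbb{1}_{S^*}\in\{0,1\}^I$ (indicator vector of $S^*$). For $j=1,\dots,\varepsilon^{-1}-1$ define $\lambda^j\in\mathbb{R}^I_{\ge0}$ by $\lambda^j_i=\frac{1-j\varepsilon}{1-(j-1)\varepsilon}\cdot\frac{1}{\Pr(i\in S_j\mid\mathcal{F}_{j-1})}\cdot\gamma^{j-1}_i$ for $i\in S_{j-1}$ (this conditional probability is positive for such $i$) and $\lambda^j_i=0$ for $i\notin S_{j-1}$; and define $\gamma^j_i=\mathbb{1}_{i\in S_j}\cdot\lambda^j_i$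 for all $i\in I$. *)

theory Defs
  imports "HOL-Probability.Probability"
begin

definition is_config :: "'a set \<Rightarrow> ('a \<Rightarrow> real) \<Rightarrow> nat \<Rightarrow> 'a set \<Rightarrow> bool" where
  "is_config I w k C \<longleftrightarrow> C \<subseteq> I \<and> card C \<le> k \<and> (\<Sum>i\<in>C. w i) \<le> 1"

definition configs :: "'a set \<Rightarrow> ('a \<Rightarrow> real) \<Rightarrow> nat \<Rightarrow> 'a set set" where
  "configs I w k = {C. is_config I w k C}"

definition OPT :: "'a set \<Rightarrow> ('a \<Rightarrow> real) \<Rightarrow> ('a \<Rightarrow> real) \<Rightarrow> nat \<Rightarrow> nat \<Rightarrow> real" where
  "OPT I w v m k = Max {(\<Sum>i\<in>(\<Union>b<m. Cs b). v i) | Cs. \<forall>b<m. Cs b \<in> configs I w k}"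

definition frac_sol :: "'a set \<Rightarrow> ('a \<Rightarrow> real) \<Rightarrow> nat \<Rightarrow> ('a set \<Rightarrow> real) \<Rightarrow> bool" where
  "frac_sol I w k x \<longleftrightarrow> (\<forall>C. x C \<ge> 0) \<and> (\<forall>C. C \<notin> configs I w k \<longrightarrow> x C = 0)"

definition cover :: "'a set \<Rightarrow> ('a \<Rightarrow> real) \<Rightarrow> nat \<Rightarrow> ('a set \<Rightarrow> real) \<Rightarrow> 'a \<Rightarrow> real" where
  "cover I w k x i = (\<Sum>C\<in>{C\<in>configs I w k. i \<in> C}. x C)"

definition xnorm :: "'a set \<Rightarrow> ('a \<Rightarrow> real) \<Rightarrow> nat \<Rightarrow> ('a set \<Rightarrow> real) \<Rightarrow> real" where
  "xnorm I w k x = (\<Sum>C\<in>configs I w k. x C)"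

definition feasible :: "'a set \<Rightarrow> ('a \<Rightarrow> real) \<Rightarrow> nat \<Rightarrow> ('a set \<Rightarrow> real) \<Rightarrow> bool" where
  "feasible I w k x \<longleftrightarrow> frac_sol I w k x \<and> (\<forall>i\<in>I. 0 \<le> cover I w k x i \<and> cover I w k x i \<le> 1)"

definition vvec :: "'a set \<Rightarrow> ('a \<Rightarrow> real) \<Rightarrow> ('a \<Rightarrow> real) \<Rightarrow> real" where
  "vvec I v y = (\<Sum>i\<in>I. y i * v i)"

definition vfrac :: "'a set \<Rightarrow> ('a \<Rightarrow> real) \<Rightarrow> ('a \<Rightarrow> real) \<Rightarrow> nat \<Rightarrow> ('a set \<Rightarrow> real) \<Rightarrow> real" where
  "vfrac I w v k x = vvec I v (cover I w k x)"

definition LP_feas :: "'a set \<Rightarrow> ('a \<Rightarrow> real) \<Rightarrow> nat \<Rightarrow> 'a set \<Rightarrow> real \<Rightarrow> ('a set \<Rightarrow> real) \<Rightarrow> bool" where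
  "LP_feas I w k S l x \<longleftrightarrow> feasible I w k x \<and> (\<forall>C. \<not> C \<subseteq> S \<longrightarrow> x C = 0) \<and> xnorm I w k x = l"

definition LP_opt :: "'a set \<Rightarrow> ('a \<Rightarrow> real) \<Rightarrow> ('a \<Rightarrow> real) \<Rightarrow> nat \<Rightarrow> 'a set \<Rightarrow> real \<Rightarrow> real" where
  "LP_opt I w v k S l = (SUP x\<in>{x. LP_feas I w k S l x}. vfrac I w v k x)"

definition approx_LP :: "real \<Rightarrow> 'a set \<Rightarrow> ('a \<Rightarrow> real) \<Rightarrow> ('a \<Rightarrow> real) \<Rightarrow> nat \<Rightarrow> 'a set \<Rightarrow> real \<Rightarrow> ('a set \<Rightarrow> real) \<Rightarrow> bool" where
  "approx_LP \<epsilon> I w v k S l x \<longleftrightarrow> LP_feas I w k S l x \<and> vfrac I w v k x \<ge> (1 - \<epsilon>) * LP_opt I w v k S l"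

definition sample_cfg :: "'a set \<Rightarrow> ('a \<Rightarrow> real) \<Rightarrow> nat \<Rightarrow> ('a set \<Rightarrow> real) \<Rightarrow> 'a set pmf" where
  "sample_cfg I w k x = embed_pmf (\<lambda>C. x C / xnorm I w k x)"

definition round_pmf :: "'a set \<Rightarrow> ('a \<Rightarrow> real) \<Rightarrow> nat \<Rightarrow> nat \<Rightarrow> ('a set \<Rightarrow> real) \<Rightarrow> (nat \<Rightarrow> 'a set) pmf" where
  "round_pmf I w k q x = Pi_pmf {..<q} {} (\<lambda>_. sample_cfg I w k x)"

text \<open>A history is the list of the outcomes of the rounds performed so far.
  S h is the set S_j after the rounds recorded in h (S_0 = I).\<close>
definition Sset :: "'a set \<Rightarrow> nat \<Rightarrow> (nat \<Rightarrow> 'a set) list \<Rightarrow> 'a set" where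
  "Sset I q h = I - (\<Union>R\<in>set h. \<Union>b<q. R b)"

text \<open>Distribution of the history after n rounds; pol j h is the solution x^j chosen in
  round j as a function of the history h of the previous j-1 rounds.\<close>
primrec hist_pmf :: "'a set \<Rightarrow> ('a \<Rightarrow> real) \<Rightarrow> nat \<Rightarrow> nat
    \<Rightarrow> (nat \<Rightarrow> (nat \<Rightarrow> 'a set) list \<Rightarrow> 'a set \<Rightarrow> real) \<Rightarrow> nat \<Rightarrow> (nat \<Rightarrow> 'a set) list pmf" where
  "hist_pmf I w k q pol 0 = return_pmf []"
| "hist_pmf I w k q pol (Suc n) =
     bind_pmf (hist_pmf I w k q pol n)
       (\<lambda>h. map_pmf (\<lambda>R. h @ [R]) (round_pmf I w k q (pol (Suc n) h)))"

text \<open>Pr(i \<in> S_j | F_(j-1)), evaluated at the history h of the first j-1 rounds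
  (elementary conditional probability given the atom {history = h}).\<close>
definition condprob :: "'a set \<Rightarrow> ('a \<Rightarrow> real) \<Rightarrow> nat \<Rightarrow> nat
    \<Rightarrow> (nat \<Rightarrow> (nat \<Rightarrow> 'a set) list \<Rightarrow> 'a set \<Rightarrow> real) \<Rightarrow> nat \<Rightarrow> 'a \<Rightarrow> (nat \<Rightarrow> 'a set) list \<Rightarrow> real" where
  "condprob I w k q pol j i h =
     measure_pmf.prob (hist_pmf I w k q pol j) {h'. take (j - 1) h' = h \<and> i \<in> Sset I q h'}
     / measure_pmf.prob (hist_pmf I w k q pol (j - 1)) {h}"

text \<open>lambda^j, given gamma^(j-1) as g, at history h of the first j rounds.\<close>
definition lam :: "real \<Rightarrow> 'a set \<Rightarrow> ('a \<Rightarrow> real) \<Rightarrow> nat \<Rightarrow> nat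
    \<Rightarrow> (nat \<Rightarrow> (nat \<Rightarrow> 'a set) list \<Rightarrow> 'a set \<Rightarrow> real) \<Rightarrow> nat \<Rightarrow> (nat \<Rightarrow> 'a set) list
    \<Rightarrow> ('a \<Rightarrow> real) \<Rightarrow> 'a \<Rightarrow> real" where
  "lam \<epsilon> I w k q pol j h g i =
     (if i \<in> Sset I q (take (j - 1) h)
      then (1 - real j * \<epsilon>) / (1 - (real j - 1) * \<epsilon>)
           * (1 / condprob I w k q pol j i (take (j - 1) h)) * g i
      else 0)"

text \<open>gamma^j at history h of the first j rounds; gamma^0 = indicator of S*.\<close>
primrec gam :: "real \<Rightarrow> 'a set \<Rightarrow> ('a \<Rightarrow> real) \<Rightarrow> nat \<Rightarrow> nat
    \<Rightarrow> (nat \<Rightarrow> (nat \<Rightarrow> 'a set) list \<Rightarrow> 'a set \<Rightarrow> real) \<Rightarrow> 'a set \<Rightarrow> nat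
    \<Rightarrow> (nat \<Rightarrow> 'a set) list \<Rightarrow> 'a \<Rightarrow> real" where
  "gam \<epsilon> I w k q pol Sstar 0 h = (\<lambda>i. if i \<in> Sstar then 1 else 0)"
| "gam \<epsilon> I w k q pol Sstar (Suc j) h =
     (\<lambda>i. (if i \<in> Sset I q h then 1 else 0)
          * lam \<epsilon> I w k q pol (Suc j) h (gam \<epsilon> I w k q pol Sstar j (take j h)) i)"

end

theory Submission
  imports Defs
begin

lemma exp_cong_pmf:
  assumes "\<And>x. x \<in> set_pmf M \<Longrightarrow> f x = g x"
  shows "measure_pmf.expectation M f = measure_pmf.expectation M (g :: _ \<Rightarrow> real)"
  using assms by (auto intro!: integral_cong_AE simp: AE_measure_pmf_iff)

lemma integral_bind_pmf_fin:
  fixes f :: "'b \<Rightarrow> real"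
  assumes finM: "finite (set_pmf M)" and finN: "\<And>x. x \<in> set_pmf M \<Longrightarrow> finite (set_pmf (N x))"
  shows "measure_pmf.expectation (bind_pmf M N) f
       = measure_pmf.expectation M (\<lambda>x. measure_pmf.expectation (N x) f)"
proof -
  define S where "S = set_pmf (bind_pmf M N)"
  have finS: "finite S" unfolding S_def using finM finN by simp
  have pb: "pmf (bind_pmf M N) y = (\<Sum>x\<in>set_pmf M. pmf (N x) y * pmf M x)" for y
    unfolding pmf_bind by (rule integral_measure_pmf_real) (use finM in auto)
  have inner: "measure_pmf.expectation (N x) f = (\<Sum>y\<in>S. f y * pmf (N x) y)" if "x \<in> set_pmf M" for x
    by (rule integral_measure_pmf_real) (use finS that in \<open>auto simp: S_def\<close>)
  have "measure_pmf.expectation (bind_pmf M N) f = (\<Sum>y\<in>S. f y * pmf (bind_pmf M N) y)"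
    by (rule integral_measure_pmf_real) (use finS in \<open>auto simp: S_def\<close>)
  also have "\<dots> = (\<Sum>y\<in>S. \<Sum>x\<in>set_pmf M. f y * pmf (N x) y * pmf M x)"
    by (simp add: pb sum_distrib_left mult.assoc)
  also have "\<dots> = (\<Sum>x\<in>set_pmf M. (\<Sum>y\<in>S. f y * pmf (N x) y) * pmf M x)"
    by (subst sum.swap) (simp add: sum_distrib_right)
  also have "\<dots> = (\<Sum>x\<in>set_pmf M. measure_pmf.expectation (N x) f * pmf M x)"
    by (rule sum.cong) (simp_all add: inner)
  also have "\<dots> = measure_pmf.expectation M (\<lambda>x. measure_pmf.expectation (N x) f)"
    by (rule integral_measure_pmf_real[symmetric]) (use finM in auto)
  finally show ?thesis .
qed

lemma configs_finite: "finite I \<Longrightarrow> finite (configs I w k)"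
  by (rule finite_subset[of _ "Pow I"]) (auto simp: configs_def is_config_def)

lemma sample_props:
  assumes fin: "finite I" and fs: "frac_sol I w k x" and pos: "xnorm I w k x > 0"
  shows "pmf (sample_cfg I w k x) C = x C / xnorm I w k x"
    and "set_pmf (sample_cfg I w k x) = {C. x C \<noteq> 0}"
proof -
  define f where "f = (\<lambda>C. x C / xnorm I w k x)"
  have nn: "\<And>C. 0 \<le> f C" using fs pos by (auto simp: frac_sol_def f_def)
  have "(\<integral>\<^sup>+C. ennreal (f C) \<partial>count_space UNIV) = (\<Sum>C\<in>configs I w k. ennreal (f C))"
    by (rule nn_integral_count_space') (use fin fs in \<open>auto simp: configs_finite f_def frac_sol_def\<close>)
  also have "\<dots> = ennreal (\<Sum>C\<in>configs I w k. f C)" using nn by (simp add: sum_ennreal)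
  also have "(\<Sum>C\<in>configs I w k. f C) = 1"
    using pos by (simp add: f_def sum_divide_distrib[symmetric] xnorm_def)
  finally have prob: "(\<integral>\<^sup>+C. ennreal (f C) \<partial>count_space UNIV) = 1" by simp
  show "pmf (sample_cfg I w k x) C = x C / xnorm I w k x"
    using pmf_embed_pmf[of f, OF nn prob] by (simp add: sample_cfg_def f_def)
  show "set_pmf (sample_cfg I w k x) = {C. x C \<noteq> 0}"
    using set_embed_pmf[of f, OF nn prob] pos by (simp add: sample_cfg_def f_def)
qed

lemma round_set:
  "set_pmf (round_pmf I w k q x) = PiE_dflt {..<q} {} (\<lambda>_. set_pmf (sample_cfg I w k x))"
  unfolding round_pmf_def by (simp add: set_Pi_pmf o_def)


lemma mlarge:
  fixes \<epsilon> :: real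
  assumes "0 < \<epsilon>" "\<epsilon> < 0.1" "real m > exp (exp (\<epsilon> powr (-30)))"
  shows "\<epsilon> * real m > 1"
proof -
  have e30: "\<epsilon> ^ 30 \<le> \<epsilon> ^ 1" using assms by (intro power_decreasing) auto
  have "\<epsilon> powr (-30) = 1 / \<epsilon> ^ 30" using assms by (simp add: powr_minus_divide powr_realpow)
  also have "\<dots> \<ge> 1 / \<epsilon>" using e30 assms by (simp add: frac_le)
  finally have a: "\<epsilon> powr (-30) \<ge> 1 / \<epsilon>" .
  have "exp (exp (\<epsilon> powr (-30))) > \<epsilon> powr (-30)"
    by (smt (verit) exp_gt_zero exp_ge_add_one_self)
  hence "real m > 1 / \<epsilon>" using a assms by linarith
  thus ?thesis using assms by (simp add: field_simps)
qed


lemma sample_avoid: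
  assumes fin: "finite I" and fs: "frac_sol I w k x" and cov: "cover I w k x i \<le> 1"
    and xn: "xnorm I w k x > 1"
  shows "\<exists>C\<in>set_pmf (sample_cfg I w k x). i \<notin> C"
proof (rule ccontr)
  assume "\<not> ?thesis"
  hence allin: "\<And>C. x C \<noteq> 0 \<Longrightarrow> i \<in> C" using sample_props(2)[OF fin fs] xn by auto
  have "xnorm I w k x = (\<Sum>C\<in>configs I w k. x C)" by (simp add: xnorm_def)
  also have "\<dots> = (\<Sum>C\<in>{C\<in>configs I w k. i \<in> C}. x C)"
    by (rule sum.mono_neutral_right) (use fin allin in \<open>auto simp: configs_finite\<close>)
  also have "\<dots> = cover I w k x i" by (simp add: cover_def)
  finally show False using cov xn by simp
qed

lemma sample_fin:
  assumes fin: "finite I" and fs: "frac_sol I w k x" and pos: "xnorm I w k x > 0"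
  shows "finite (set_pmf (sample_cfg I w k x))"
proof -
  have "set_pmf (sample_cfg I w k x) \<subseteq> configs I w k"
    using sample_props(2)[OF fin fs pos] fs by (auto simp: frac_sol_def)
  thus ?thesis using configs_finite[OF fin] finite_subset by blast
qed

lemma round_fin:
  assumes fin: "finite I" and fs: "frac_sol I w k x" and pos: "xnorm I w k x > 0"
  shows "finite (set_pmf (round_pmf I w k q x))"
  unfolding round_set using sample_fin[OF assms] by (intro finite_PiE_dflt) auto

lemma round_pos:
  assumes fin: "finite I" and fs: "frac_sol I w k x" and cov: "cover I w k x i \<le> 1"
    and xn: "xnorm I w k x > 1"
  shows "measure_pmf.prob (round_pmf I w k q x) {R. \<forall>b<q. i \<notin> R b} > 0"
proof -
  obtain C where C: "C \<in> set_pmf (sample_cfg I w k x)" "i \<notin> C"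
    using sample_avoid[OF assms] by blast
  define R where "R = (\<lambda>b. if b < q then C else {})"
  have "R \<in> set_pmf (round_pmf I w k q x)" unfolding round_set PiE_dflt_def R_def using C by auto
  moreover have "R \<in> {R. \<forall>b<q. i \<notin> R b}" using C by (auto simp: R_def)
  ultimately show ?thesis by (rule measure_pmf_posI)
qed

lemma integral_pmf_point:
  assumes "\<And>a. a \<in> set_pmf M \<Longrightarrow> f a \<noteq> 0 \<Longrightarrow> a = h"
  shows "measure_pmf.expectation M f = f h * pmf M (h::'b)"
  using integral_measure_pmf_real[of "{h}" M f] assms by auto

lemma Sset_append: "Sset I q (h @ [R]) = Sset I q h - (\<Union>b<q. R b)"
  by (auto simp: Sset_def)

lemma exp_indicator_pmf: "measure_pmf.expectation M (indicator A) = measure_pmf.prob M A"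
  by simp

theorem lemma3p4:
  fixes I :: "'a set" and w v :: "'a \<Rightarrow> real" and m k q :: nat and \<epsilon> :: real
    and pol :: "nat \<Rightarrow> (nat \<Rightarrow> 'a set) list \<Rightarrow> 'a set \<Rightarrow> real"
    and Cstar :: "nat \<Rightarrow> 'a set" and j :: nat
  assumes fin: "finite I"
    and w_range: "\<forall>i\<in>I. 0 \<le> w i \<and> w i \<le> 1"
    and v_nonneg: "\<forall>i\<in>I. 0 \<le> v i"
    and m_pos: "m > 0" and k_pos: "k > 0"
    and eps: "0 < \<epsilon>" "\<epsilon> < 0.1"
    and eps_sqrt: "\<exists>n::nat. 1 / sqrt \<epsilon> = real n"
    and simple_m: "real m > exp (exp (\<epsilon> powr (-30)))"
    and q_def: "real q = \<epsilon> * real m"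
    and pol_approx: "\<forall>j'::nat. 1 \<le> j' \<and> real j' \<le> 1 / \<epsilon> \<longrightarrow>
        (\<forall>h\<in>set_pmf (hist_pmf I w k q pol (j' - 1)).
           approx_LP \<epsilon> I w v k (Sset I q h) (real m * (1 - (real j' - 1) * \<epsilon>)) (pol j' h))"
    and Cstar_conf: "\<forall>b<m. Cstar b \<in> configs I w k"
    and Cstar_opt: "(\<Sum>i\<in>(\<Union>b<m. Cstar b). v i) = OPT I w v m k"
    and j_range: "1 \<le> j" "real j \<le> 1 / \<epsilon>"
  shows "measure_pmf.expectation (hist_pmf I w k q pol (j - 1))
           (\<lambda>h. vvec I v (gam \<epsilon> I w k q pol (\<Union>b<m. Cstar b) (j - 1) h))
         = (1 - (real j - 1) * \<epsilon>) * (\<Sum>i\<in>(\<Union>b<m. Cstar b). v i)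
       \<and> (1 - (real j - 1) * \<epsilon>) * (\<Sum>i\<in>(\<Union>b<m. Cstar b). v i)
         = (1 - (real j - 1) * \<epsilon>) * OPT I w v m k"
proof -
  define Ss where "Ss = (\<Union>b<m. Cstar b)"
  define H where "H = hist_pmf I w k q pol"
  define G where "G = gam \<epsilon> I w k q pol Ss"
  have cfgI: "\<And>C. C \<in> configs I w k \<Longrightarrow> C \<subseteq> I" by (auto simp: configs_def is_config_def)
  have SsI: "Ss \<subseteq> I" using Cstar_conf cfgI unfolding Ss_def by blast
  have meps: "\<epsilon> * real m > 1" using mlarge eps simple_m by blast
  have roundA: "frac_sol I w k (pol j' h) \<and> (\<forall>i. cover I w k (pol j' h) i \<le> 1)
      \<and> xnorm I w k (pol j' h) > 1"
    if j'1: "1 \<le> j'" and j'2: "real j' \<le> 1/\<epsilon>" and hH: "h \<in> set_pmf (H (j'-1))" for j' h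
  proof -
    from pol_approx j'1 j'2 hH
    have "approx_LP \<epsilon> I w v k (Sset I q h) (real m * (1 - (real j' - 1) * \<epsilon>)) (pol j' h)"
      unfolding H_def by blast
    hence lp: "LP_feas I w k (Sset I q h) (real m * (1 - (real j' - 1) * \<epsilon>)) (pol j' h)"
      by (simp add: approx_LP_def)
    hence fs: "frac_sol I w k (pol j' h)" and cov: "\<forall>i\<in>I. cover I w k (pol j' h) i \<le> 1"
      and xn: "xnorm I w k (pol j' h) = real m * (1 - (real j' - 1) * \<epsilon>)"
      by (auto simp: LP_feas_def feasible_def)
    have "\<forall>i. cover I w k (pol j' h) i \<le> 1"
    proof
      fix i show "cover I w k (pol j' h) i \<le> 1"
      proof (cases "i \<in> I")
        case True thus ?thesis using cov by auto
      next
        case False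
        hence e: "{C \<in> configs I w k. i \<in> C} = {}" using cfgI by auto
        show ?thesis unfolding cover_def e by simp
      qed
    qed
    moreover have "real m * (1 - (real j' - 1) * \<epsilon>) > 1"
    proof -
      have "real j' * \<epsilon> \<le> 1" using j'2 eps by (simp add: field_simps)
      hence "1 - (real j' - 1) * \<epsilon> \<ge> \<epsilon>" by (simp add: algebra_simps)
      hence "real m * (1 - (real j' - 1) * \<epsilon>) \<ge> real m * \<epsilon>" by (simp add: mult_left_mono)
      thus ?thesis using meps by (simp add: mult.commute)
    qed
    ultimately show ?thesis using fs xn by simp
  qed
  have HC: "finite (set_pmf (H n)) \<and> (\<forall>h\<in>set_pmf (H n). length h = n)" if "real n \<le> 1/\<epsilon>" for n
    using that
  proof (induction n)
    case 0 show ?case by (simp add: H_def)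
  next
    case (Suc n)
    have IH: "finite (set_pmf (H n)) \<and> (\<forall>h\<in>set_pmf (H n). length h = n)"
      using Suc by simp
    have "finite (set_pmf (round_pmf I w k q (pol (Suc n) h)))" if "h \<in> set_pmf (H n)" for h
      using roundA[of "Suc n" h] Suc.prems that by (intro round_fin[OF fin]) auto
    then show ?case using IH by (auto simp: H_def)
  qed
  have Gsupp: "i \<in> Sset I q h" if "h \<in> set_pmf (H n)" "G n h i \<noteq> 0" for n h i
  proof (cases n)
    case 0 thus ?thesis using that SsI by (auto simp: H_def G_def Sset_def split: if_splits)
  next
    case (Suc n') thus ?thesis using that by (auto simp: G_def split: if_splits)
  qed
  have D: "\<forall>i. measure_pmf.expectation (H n) (\<lambda>h. G n h i)
            = (1 - real n * \<epsilon>) * (if i \<in> Ss then 1 else 0)" if "real (Suc n) \<le> 1/\<epsilon>" for n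
    using that
  proof (induction n)
    case 0 show ?case by (simp add: H_def G_def)
  next
    case (Suc n)
    have IH: "\<forall>i. measure_pmf.expectation (H n) (\<lambda>h. G n h i)
            = (1 - real n * \<epsilon>) * (if i \<in> Ss then 1 else 0)" using Suc by simp
    have hn: "real (Suc n) \<le> 1/\<epsilon>" using Suc.prems by simp
    have se: "real (Suc (Suc n)) * \<epsilon> \<le> 1" using Suc.prems eps by (simp add: field_simps)
    have finH: "finite (set_pmf (H n))" and lenH: "\<And>h. h \<in> set_pmf (H n) \<Longrightarrow> length h = n"
      using HC[of n] hn by auto
    have RA: "frac_sol I w k (pol (Suc n) h) \<and> (\<forall>i. cover I w k (pol (Suc n) h) i \<le> 1)
      \<and> xnorm I w k (pol (Suc n) h) > 1" if "h \<in> set_pmf (H n)" for h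
      using roundA[of "Suc n" h] hn that by simp
    have finR: "finite (set_pmf (round_pmf I w k q (pol (Suc n) h)))" if "h \<in> set_pmf (H n)" for h
      using RA[OF that] by (intro round_fin[OF fin]) auto
    have Hs: "H (Suc n) = bind_pmf (H n) (\<lambda>h. map_pmf (\<lambda>R. h @ [R]) (round_pmf I w k q (pol (Suc n) h)))"
      by (simp add: H_def)
    have bindE: "measure_pmf.expectation (H (Suc n)) f = measure_pmf.expectation (H n)
       (\<lambda>h. measure_pmf.expectation (round_pmf I w k q (pol (Suc n) h)) (\<lambda>R. f (h @ [R])))"
      for f :: "(nat \<Rightarrow> 'a set) list \<Rightarrow> real"
    proof -
      have "measure_pmf.expectation (H (Suc n)) f = measure_pmf.expectation (H n)
       (\<lambda>h. measure_pmf.expectation (map_pmf (\<lambda>R. h @ [R]) (round_pmf I w k q (pol (Suc n) h))) f)"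
        unfolding Hs by (rule integral_bind_pmf_fin[OF finH]) (simp add: finR)
      thus ?thesis by (simp only: integral_map_pmf)
    qed
    show ?case
    proof
      fix i
      define p where "p h = measure_pmf.prob (round_pmf I w k q (pol (Suc n) h)) {R. \<forall>b<q. i \<notin> R b}" for h
      have ppos: "p h > 0" if "h \<in> set_pmf (H n)" for h
        unfolding p_def using RA[OF that] by (intro round_pos[OF fin]) auto
      have cp: "condprob I w k q pol (Suc n) i h = p h"
        if hH: "h \<in> set_pmf (H n)" and iS: "i \<in> Sset I q h" for h
      proof -
        define E where "E = {h'. take n h' = h \<and> i \<in> Sset I q h'}"
        define F where "F a = measure_pmf.expectation (round_pmf I w k q (pol (Suc n) a)) (\<lambda>R. indicator E (a @ [R]) :: real)" for a
        have "measure_pmf.prob (H (Suc n)) E = measure_pmf.expectation (H (Suc n)) (indicator E)"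
          by simp
        also have "\<dots> = measure_pmf.expectation (H n)
           (\<lambda>a. measure_pmf.expectation (round_pmf I w k q (pol (Suc n) a)) (\<lambda>R. indicator E (a @ [R])))"
          by (rule bindE)
        also have "\<dots> = F h * pmf (H n) h"
          unfolding F_def[symmetric]
        proof (rule integral_pmf_point)
          fix a assume a: "a \<in> set_pmf (H n)" and ne: "F a \<noteq> 0"
          have "\<exists>R. a @ [R] \<in> E"
          proof (rule ccontr)
            assume "\<not> ?thesis"
            hence "(\<lambda>R. indicator E (a @ [R]) :: real) = (\<lambda>R. 0)" by (auto simp: indicator_def)
            thus False using ne by (simp add: F_def)
          qed
          then obtain R where "a @ [R] \<in> E" by blast
          thus "a = h" using lenH[OF a] by (simp add: E_def)
        qed
        also have "\<dots> = p h * pmf (H n) h"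
        proof -
          have "(\<lambda>R. indicator E (h @ [R]) :: real) = indicator {R. \<forall>b<q. i \<notin> R b}"
            using lenH[OF hH] iS by (auto simp: indicator_def E_def Sset_append fun_eq_iff)
          thus ?thesis by (simp add: p_def F_def)
        qed
        finally have num: "measure_pmf.prob (H (Suc n)) E = p h * pmf (H n) h" .
        have pm: "pmf (H n) h > 0" using hH by (simp add: pmf_positive)
        have "condprob I w k q pol (Suc n) i h = measure_pmf.prob (H (Suc n)) E / measure_pmf.prob (H n) {h}"
          unfolding condprob_def E_def H_def by (simp only: diff_Suc_1)
        then show ?thesis using num pm by (simp add: measure_pmf_single)
      qed
      have "measure_pmf.expectation (H (Suc n)) (\<lambda>h. G (Suc n) h i)
          = measure_pmf.expectation (H n)
             (\<lambda>h. measure_pmf.expectation (round_pmf I w k q (pol (Suc n) h)) (\<lambda>R. G (Suc n) (h @ [R]) i))"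
        by (rule bindE)
      also have "\<dots> = measure_pmf.expectation (H n)
          (\<lambda>h. (1 - real (Suc n) * \<epsilon>) / (1 - (real (Suc n) - 1) * \<epsilon>) * G n h i)"
      proof (rule exp_cong_pmf)
        fix h assume h: "h \<in> set_pmf (H n)"
        have len: "length h = n" using lenH[OF h] .
        have eq: "G (Suc n) (h @ [R]) i = indicator {R. \<forall>b<q. i \<notin> R b} R *
          (if i \<in> Sset I q h then (1 - real (Suc n) * \<epsilon>) / (1 - (real (Suc n) - 1) * \<epsilon>)
             * (1 / condprob I w k q pol (Suc n) i h) * G n h i else 0)" for R
          using len by (auto simp: G_def lam_def Sset_append indicator_def)
        show "measure_pmf.expectation (round_pmf I w k q (pol (Suc n) h)) (\<lambda>R. G (Suc n) (h @ [R]) i)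
          = (1 - real (Suc n) * \<epsilon>) / (1 - (real (Suc n) - 1) * \<epsilon>) * G n h i"
        proof (cases "i \<in> Sset I q h")
          case True
          have "measure_pmf.expectation (round_pmf I w k q (pol (Suc n) h)) (\<lambda>R. G (Suc n) (h @ [R]) i)
             = p h * ((1 - real (Suc n) * \<epsilon>) / (1 - (real (Suc n) - 1) * \<epsilon>)
             * (1 / p h) * G n h i)"
            unfolding eq using True cp[OF h True] by (simp add: p_def)
          thus ?thesis using ppos[OF h] by simp
        next
          case False
          hence "G n h i = 0" using Gsupp h by blast
          thus ?thesis unfolding eq using False by simp
        qed
      qed
      also have "\<dots> = (1 - real (Suc n) * \<epsilon>) / (1 - (real (Suc n) - 1) * \<epsilon>)
           * measure_pmf.expectation (H n) (\<lambda>h. G n h i)" by simp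
      also have "\<dots> = (1 - real (Suc n) * \<epsilon>) * (if i \<in> Ss then 1 else 0)"
      proof -
        have "1 - real n * \<epsilon> > 0" using se eps by (simp add: algebra_simps) 
        thus ?thesis using IH by simp
      qed
      finally show "measure_pmf.expectation (H (Suc n)) (\<lambda>h. G (Suc n) h i)
          = (1 - real (Suc n) * \<epsilon>) * (if i \<in> Ss then 1 else 0)" .
    qed
  qed
  obtain n where jn: "j = Suc n" using j_range by (cases j) auto
  have hn: "real (Suc n) \<le> 1/\<epsilon>" using j_range jn by simp
  have finH: "finite (set_pmf (H n))" using HC[of n] hn by simp
  have "measure_pmf.expectation (H n) (\<lambda>h. vvec I v (G n h))
      = (\<Sum>i\<in>I. measure_pmf.expectation (H n) (\<lambda>h. G n h i * v i))"
    unfolding vvec_def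
    by (rule Bochner_Integration.integral_sum[where f="\<lambda>i h. G n h i * v i"]) (rule integrable_measure_pmf_finite[OF finH])
  also have "\<dots> = (\<Sum>i\<in>I. (1 - real n * \<epsilon>) * (if i \<in> Ss then 1 else 0) * v i)"
    using D[OF hn] by simp
  also have "\<dots> = (1 - real n * \<epsilon>) * (\<Sum>i\<in>Ss. v i)"
  proof -
    have a: "(\<Sum>i\<in>I. (1 - real n * \<epsilon>) * (if i \<in> Ss then 1 else 0) * v i)
       = (1 - real n * \<epsilon>) * (\<Sum>i\<in>I. if i \<in> Ss then v i else 0)"
      by (simp add: sum_distrib_left) (rule sum.cong, auto)
    have b: "(\<Sum>i\<in>I. if i \<in> Ss then v i else 0) = (\<Sum>i\<in>Ss. v i)"
      using sum.inter_restrict[OF fin, of v Ss] Int_absorb1[OF SsI] by simp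
    show ?thesis using a b by simp
  qed
  finally show ?thesis using jn Cstar_opt by (simp add: H_def G_def Ss_def)
qed

end
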